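(* For every fixed $C\in\mathbb C$ there exists a unique formal series $\rho\in\mathbb C[[\zeta^{-1}]]$ satisfying $$2\zeta^3\rho'''+3\zeta^2\rho''-2\zeta(\zeta-2C)\rho'-2C\rho=0,\qquad\rho(\infty)=1,$$ where $'=d/d\zeta$ and $\rho(\infty)$ is the constant term. Moreover $\rho\in\mathbb Q[C][[\zeta^{-1}]]$ and $\rho$ satisfies $$\zeta\rho'^2+\Bigl(1-\frac{2C}\zeta\Bigr)\rho^2-\rho\rho'-2\zeta\rho\rho''=1.$$ *)

theory Defs
  imports Complex_Main "HOL-Computational_Algebra.Formal_Laurent_Series"
    "HOL-Computational_Algebra.Polynomial"
begin

text \<open>Formal series in \<zeta>^{-1}: we use formal Laurent series in the variable
  w = \<zeta>^{-1} (so fls_X plays the role of 1/\<zeta> and fls_X_inv the role of \<zeta>).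
  An element of C[[\<zeta>^{-1}]] is an fps in w, embedded via fps_to_fls.\<close>

abbreviation zeta :: "complex fls" where
  "zeta \<equiv> fls_X_inv"

text \<open>Derivative d/d\<zeta>: on  \<Sum> c_n \<zeta>^{-n}  it gives  \<Sum> -n c_n \<zeta>^{-n-1}.
  In terms of w = 1/\<zeta> this is  -w^2 d/dw  (chain rule).\<close>
definition zderiv :: "complex fls \<Rightarrow> complex fls" where
  "zderiv f = - (fls_X\<^sup>2 * fls_deriv f)"


definition rho_ode :: "complex \<Rightarrow> complex fps \<Rightarrow> bool" where
  "rho_ode C \<rho> \<longleftrightarrow>
     (let R = fps_to_fls \<rho>; c = fls_const C in
       2 * zeta^3 * zderiv (zderiv (zderiv R)) + 3 * zeta^2 * zderiv (zderiv R)
       - 2 * zeta * (zeta - 2 * c) * zderiv R - 2 * c * R = 0)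
     \<and> fps_nth \<rho> 0 = 1"

end

theory Submission
  imports Defs
begin

lemma zd: "zderiv (fps_to_fls f) = fps_to_fls (-(fps_X^2 * fps_deriv f))"
  by (simp add: zderiv_def fls_deriv_fps_to_fls fls_times_fps_to_fls fps_to_fls_power)

lemma xz: "fls_X * zeta = (1::complex fls)"
  by (simp add: fls_X_times_conv_shift(1))

abbreviation "d1 r \<equiv> fps_deriv r"
abbreviation "d2 r \<equiv> fps_deriv (fps_deriv r)"
abbreviation "d3 r \<equiv> fps_deriv (fps_deriv (fps_deriv r))"

lemma zd2: "zderiv (zderiv (fps_to_fls r)) = fps_to_fls (2*fps_X^3*d1 r + fps_X^4 * d2 r)"
  apply (simp only: zd fps_to_fls_eq_iff)
  apply (simp add: fps_deriv_power algebra_simps numeral_eq_Suc)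
  done

lemma zd3: "zderiv (zderiv (zderiv (fps_to_fls r))) = fps_to_fls (-(6*fps_X^4*d1 r + 6*fps_X^5 * d2 r + fps_X^6 * d3 r))"
  apply (simp only: zd2 zd fps_to_fls_eq_iff)
  apply (simp add: fps_deriv_power algebra_simps numeral_eq_Suc)
  done

definition E :: "complex \<Rightarrow> complex fps \<Rightarrow> complex fps" where
  "E C r = -2*fps_X^3*d3 r - 9*fps_X^2*d2 r
     - 6*fps_X*d1 r + 2*d1 r - 4*fps_const C*fps_X*d1 r - 2*fps_const C*r"

lemma gen1:
  fixes x z c r0 r1 r2 r3 :: "'a::comm_ring_1"
  assumes "x*z = 1"
  shows "2 * z^3 * (-(6*x^4*r1 + 6*x^5*r2 + x^6*r3)) + 3*z^2*(2*x^3*r1 + x^4*r2)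
     - 2*z*(z-2*c)*(-(x^2*r1)) - 2*c*r0 =
     -2*x^3*r3 - 9*x^2*r2 - 6*x*r1 + 2*r1 - 4*c*x*r1 - 2*c*r0"
proof -
  have "2 * z^3 * (-(6*x^4*r1 + 6*x^5*r2 + x^6*r3)) + 3*z^2*(2*x^3*r1 + x^4*r2)
     - 2*z*(z-2*c)*(-(x^2*r1)) - 2*c*r0 = 2*(-(6*(x*z)^3*x*r1 + 6*(x*z)^3*x^2*r2 + (x*z)^3*x^3*r3)) + 3*(2*(x*z)^2*x*r1 + (x*z)^2*x^2*r2) + 2*((x*z)^2 - 2*c*(x*z)*x)*r1 - 2*c*r0"
    by (simp add: algebra_simps power_mult_distrib power2_eq_square power3_eq_cube eval_nat_numeral)
  also have "\<dots> = -2*x^3*r3 - 9*x^2*r2 - 6*x*r1 + 2*r1 - 4*c*x*r1 - 2*c*r0"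
    unfolding assms by (simp add: algebra_simps power_mult_distrib power2_eq_square power3_eq_cube eval_nat_numeral)
  finally show ?thesis .
qed
lemma ode_conv:
  "(let R = fps_to_fls \<rho>; c = fls_const C in
       2 * zeta^3 * zderiv (zderiv (zderiv R)) + 3 * zeta^2 * zderiv (zderiv R)
       - 2 * zeta * (zeta - 2 * c) * zderiv R - 2 * c * R) = fps_to_fls (E C \<rho>)"
  unfolding Let_def E_def unfolding zd3 unfolding zd2 unfolding zd
  apply (simp only: fps_to_fls_plus fps_to_fls_minus fps_to_fls_uminus fls_times_fps_to_fls
     fps_to_fls_power fps_X_to_fls fps_const_to_fls fps_to_fls_numeral)
  apply (rule gen1[OF xz])
  done

definition q :: "complex \<Rightarrow> complex fps \<Rightarrow> complex fps" where
  "q C r = fps_X^3*(d1 r)^2 + (1 - 2*fps_const C*fps_X)*r^2 - 3*fps_X^2*r*d1 r - 2*fps_X^3*r*d2 r"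

lemma gen2:
  fixes x z c r0 r1 r2 :: "'a::comm_ring_1"
  assumes "x*z = 1"
  shows "z*(-(x^2*r1))^2 + (1 - 2*c*x)*r0^2 - r0*(-(x^2*r1)) - 2*z*r0*(2*x^3*r1 + x^4*r2)
    = x^3*r1^2 + (1 - 2*c*x)*r0^2 - 3*x^2*r0*r1 - 2*x^3*r0*r2"
proof -
  have "z*(-(x^2*r1))^2 + (1 - 2*c*x)*r0^2 - r0*(-(x^2*r1)) - 2*z*r0*(2*x^3*r1 + x^4*r2)
    = (x*z)*x^3*r1^2 + (1 - 2*c*x)*r0^2 + r0*x^2*r1 - 2*r0*(2*(x*z)*x^2*r1 + (x*z)*x^3*r2)"
    by (simp add: algebra_simps power_mult_distrib power2_eq_square power3_eq_cube eval_nat_numeral)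
  also have "\<dots> = x^3*r1^2 + (1 - 2*c*x)*r0^2 - 3*x^2*r0*r1 - 2*x^3*r0*r2"
    unfolding assms by (simp add: algebra_simps power_mult_distrib power2_eq_square power3_eq_cube eval_nat_numeral)
  finally show ?thesis .
qed

lemma q_conv:
  "(let R = fps_to_fls \<rho>; c = fls_const C in
             zeta * (zderiv R)^2 + (1 - 2 * c / zeta) * R^2 - R * zderiv R
             - 2 * zeta * R * zderiv (zderiv R)) = fps_to_fls (q C \<rho>)"
proof -
  have "2 * fls_const C / zeta = 2 * fls_const C * fls_X"
    by (simp add: divide_inverse fls_inverse_X_inv)
  then show ?thesis
  unfolding Let_def q_def unfolding zd2 unfolding zd
  apply (simp only: fps_to_fls_plus fps_to_fls_minus fps_to_fls_uminus fls_times_fps_to_fls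
     fps_to_fls_power fps_X_to_fls fps_const_to_fls fps_to_fls_numeral fps_one_to_fls)
  apply (rule gen2[OF xz])
  done
qed

lemma q_deriv: "fps_deriv (q C r) = r * E C r"
  unfolding q_def E_def
  by (simp add: fps_deriv_power algebra_simps numeral_eq_Suc)

lemma numeral_mult_nth: "(numeral k * f) $ n = (numeral k :: 'a::comm_semiring_1) * f $ n"
  by (metis fps_numeral_fps_const fps_mult_left_const_nth)

lemma E_nth: "E C r $ n = 2 * of_nat (n+1) * r$(n+1)
   - (of_nat n * of_nat (n+1) * (2*of_nat n+1) + 4*C*of_nat n + 2*C) * r$n"
proof (cases "n < 3")
  case True
  then have "n = 0 \<or> n = 1 \<or> n = 2" by auto
  then show ?thesis
    unfolding E_def
    by (elim disjE; simp add: fps_X_power_mult_nth mult.assoc numeral_mult_nth del: power_Suc; simp add: algebra_simps numeral_2_eq_2 fps_numeral_nth)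
next
  case False
  then obtain m where m: "n = m + 3" by (metis add.commute le_Suc_ex not_less)
  show ?thesis
    unfolding E_def m
    by (simp add: fps_X_power_mult_nth mult.assoc numeral_mult_nth del: power_Suc) (simp add: algebra_simps numeral_3_eq_3)
qed

definition fC :: "complex \<Rightarrow> nat \<Rightarrow> complex" where
  "fC C n = (of_nat n * of_nat (n+1) * (2*of_nat n+1) + 4*C*of_nat n + 2*C) / (2 * of_nat (n+1))"

fun seqC :: "complex \<Rightarrow> nat \<Rightarrow> complex" where
  "seqC C 0 = 1"
| "seqC C (Suc n) = seqC C n * fC C n"

lemma E_zero_iff: "E C r = 0 \<longleftrightarrow> (\<forall>n. r$(Suc n) = r$n * fC C n)"
proof -
  have "E C r = 0 \<longleftrightarrow> (\<forall>n. E C r $ n = 0)" by (simp add: fps_eq_iff)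
  also have "\<dots> \<longleftrightarrow> (\<forall>n. r$(Suc n) = r$n * fC C n)"
  proof -
    have "E C r $ n = 0 \<longleftrightarrow> r$(Suc n) = r$n * fC C n" for n
    proof -
      have nz: "(2 * of_nat (n+1) :: complex) \<noteq> 0" by (metis mult_eq_0_iff of_nat_eq_0_iff zero_neq_numeral add_eq_0_iff_both_eq_0 one_neq_zero)
      show ?thesis unfolding E_nth fC_def using nz
        by (auto simp: field_simps)
    qed
    then show ?thesis by simp
  qed
  finally show ?thesis .
qed

lemma char: "rho_ode C r \<longleftrightarrow> (\<forall>n. r$n = seqC C n)"
proof -
  have "rho_ode C r \<longleftrightarrow> E C r = 0 \<and> r$0 = 1"
    by (simp only: rho_ode_def Let_def ode_conv[unfolded Let_def] fps_to_fls_eq_0_iff)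
  also have "\<dots> \<longleftrightarrow> (\<forall>n. r$n = seqC C n)"
  proof
    assume h: "E C r = 0 \<and> r$0 = 1"
    show "\<forall>n. r$n = seqC C n"
    proof
      fix n show "r$n = seqC C n"
        by (induction n) (use h E_zero_iff in auto)
    qed
  next
    assume h: "\<forall>n. r$n = seqC C n"
    then show "E C r = 0 \<and> r$0 = 1" by (simp add: E_zero_iff)
  qed
  finally show ?thesis .
qed

fun pp :: "nat \<Rightarrow> rat poly" where
  "pp 0 = 1"
| "pp (Suc n) = smult (1 / (2 * of_nat (n+1))) (smult (of_nat n * of_nat (n+1) * (2*of_nat n+1)) (pp n) + pCons 0 (smult (4*of_nat n+2) (pp n)))"

lemma map_poly_of_rat_add: "map_poly (of_rat :: rat \<Rightarrow> 'a::field_char_0) (a + b) = map_poly of_rat a + map_poly of_rat b"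
  by (intro poly_eqI) (simp add: coeff_map_poly of_rat_add)

lemma map_poly_of_rat_smult: "map_poly (of_rat :: rat \<Rightarrow> 'a::field_char_0) (smult c a) = smult (of_rat c) (map_poly of_rat a)"
  by (rule map_poly_smult) (simp_all add: of_rat_mult)

lemma pp_eval: "poly (map_poly of_rat (pp n)) C = seqC C n"
proof (induction n)
  case 0 then show ?case by simp
next
  case (Suc n)
  show ?case
    by (simp add: map_poly_of_rat_add map_poly_of_rat_smult map_poly_pCons Suc fC_def
        of_rat_divide of_rat_mult of_rat_add field_simps)
qed

lemma q0: "q C r $ 0 = (r$0)^2"
  by (simp add: q_def fps_X_power_mult_nth mult.assoc numeral_mult_nth power2_eq_square del: power_Suc)

theorem proposition4p1:
  shows "(\<forall>C::complex. \<exists>!\<rho>::complex fps. rho_ode C \<rho>)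
    \<and> (\<exists>p :: nat \<Rightarrow> rat poly. \<forall>C \<rho>. rho_ode C \<rho> \<longrightarrow>
          (\<forall>n. fps_nth \<rho> n = poly (map_poly of_rat (p n)) C))
    \<and> (\<forall>C \<rho>. rho_ode C \<rho> \<longrightarrow>
          (let R = fps_to_fls \<rho>; c = fls_const C in
             zeta * (zderiv R)^2 + (1 - 2 * c / zeta) * R^2 - R * zderiv R
             - 2 * zeta * R * zderiv (zderiv R) = 1))"
proof (intro conjI allI impI)
  fix C :: complex
  show "\<exists>!\<rho>. rho_ode C \<rho>"
  proof (rule ex1I[of _ "Abs_fps (seqC C)"])
    show "rho_ode C (Abs_fps (seqC C))" by (simp add: char)
  next
    fix r assume "rho_ode C r"
    then show "r = Abs_fps (seqC C)" by (simp add: char fps_eq_iff)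
  qed
next
  show "\<exists>p :: nat \<Rightarrow> rat poly. \<forall>C \<rho>. rho_ode C \<rho> \<longrightarrow>
          (\<forall>n. fps_nth \<rho> n = poly (map_poly of_rat (p n)) C)"
    by (rule exI[of _ pp]) (simp add: char pp_eval)
next
  fix C r assume h: "rho_ode C r"
  then have E0: "E C r = 0" and r0: "r$0 = 1"
    by (simp_all only: rho_ode_def Let_def ode_conv[unfolded Let_def] fps_to_fls_eq_0_iff)
  have "fps_deriv (q C r) = 0" by (simp add: q_deriv E0)
  then have "q C r = fps_const (q C r $ 0)" using fps_deriv_eq_0_iff by blast
  then have "q C r = 1" by (simp add: q0 r0)
  then show "let R = fps_to_fls r; c = fls_const C in
             zeta * (zderiv R)^2 + (1 - 2 * c / zeta) * R^2 - R * zderiv R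
             - 2 * zeta * R * zderiv (zderiv R) = 1"
    unfolding Let_def q_conv[of r C, unfolded Let_def] using \<open>q C r = 1\<close> by simp
qed
end
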